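(* For all $\Gamma\subseteq\{0,1\}^\infty$, $$\dim_H(\Gamma)=\inf \mathscr G(\Gamma),$$ where $\mathscr G(\Gamma)=\{s\in(0,\infty) : \text{there exists a learning function } l \text{ which } s\text{-learns every } X\in\Gamma\}$.
   Context: $\dim_H$ denotes the Hausdorff dimension on the Cantor space $\{0,1\}^\infty$ (with respect to the standard metric, equivalently defined via covers by cylinders $C_w=\{Y: w\sqsubseteq Y\}$ with weight $2^{-s|w|}$). A learning function is a function $l:\{0,1\}^*\to\{0,1\}$ (identifying yes with $1$ and no with $0$). $Y\upharpoonright i$ is the length-$i$ prefix of $Y$; $\lambda$ is the uniform (Lebesgue) measure on $\{0,1\}^\infty$. For a nonempty string $w$, the path average is $\mathrm{AVG}_l(w)=\frac{1}{|w|}\sum_{i=0}^{|w|} l(w\upharpoonright i)$. A learning function $l$ satisfies the measure condition if for all $n\in\mathbb N$, $\lambda(\{Y\in\{0,1\}^\infty : \#\{i\in\mathbb N: l(Y\upharpoonright i)=1\}\ge n\})\le 2^{-n}$. For $s\ge0$, $l$ $s$-learns $X$ iff $l$ satisfies the measure condition and $\limsup_{n\to\infty}\mathrm{AVG}_l(X\upharpoonright n)\ge 1-s$ (no computability restriction on $l$). *)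

theory Defs
  imports "HOL-Probability.Probability"
begin

text \<open>Cantor space: infinite binary sequences as nat \<Rightarrow> bool; strings as bool lists
  (True = 1 = yes, False = 0 = no).\<close>

definition pref :: "(nat \<Rightarrow> bool) \<Rightarrow> nat \<Rightarrow> bool list" where
  "pref Y n = map Y [0..<n]"

definition cyl :: "bool list \<Rightarrow> (nat \<Rightarrow> bool) set" where
  "cyl w = {Y. pref Y (length w) = w}"

definition hausdorff_pre :: "real \<Rightarrow> nat \<Rightarrow> (nat \<Rightarrow> bool) set \<Rightarrow> ennreal" where
  "hausdorff_pre s n \<Gamma> = (INF W \<in> {W :: nat \<Rightarrow> bool list.
        (\<forall>k. n \<le> length (W k)) \<and> \<Gamma> \<subseteq> (\<Union>k. cyl (W k))}.
        (\<Sum>k. ennreal (2 powr (- s * real (length (W k))))))"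

definition hausdorff_measure :: "real \<Rightarrow> (nat \<Rightarrow> bool) set \<Rightarrow> ennreal" where
  "hausdorff_measure s \<Gamma> = (SUP n. hausdorff_pre s n \<Gamma>)"

definition dimH :: "(nat \<Rightarrow> bool) set \<Rightarrow> real" where
  "dimH \<Gamma> = Inf {s. 0 \<le> s \<and> hausdorff_measure s \<Gamma> = 0}"

definition unif :: "(nat \<Rightarrow> bool) measure" where
  "unif = PiM UNIV (\<lambda>_. measure_pmf (bernoulli_pmf (1/2)))"

definition measure_condition :: "(bool list \<Rightarrow> bool) \<Rightarrow> bool" where
  "measure_condition l \<longleftrightarrow>
     (\<forall>n::nat. emeasure unif
        {Y. infinite {i. l (pref Y i)} \<or> n \<le> card {i. l (pref Y i)}}
        \<le> ennreal ((1/2) ^ n))"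

definition AVG :: "(bool list \<Rightarrow> bool) \<Rightarrow> bool list \<Rightarrow> real" where
  "AVG l w = (1 / real (length w)) * (\<Sum>i\<in>{0..length w}. (if l (take i w) then 1 else 0))"

definition learns :: "(bool list \<Rightarrow> bool) \<Rightarrow> real \<Rightarrow> (nat \<Rightarrow> bool) \<Rightarrow> bool" where
  "learns l s X \<longleftrightarrow> measure_condition l \<and>
     limsup (\<lambda>n. ereal (AVG l (pref X n))) \<ge> ereal (1 - s)"

definition learnset :: "(nat \<Rightarrow> bool) set \<Rightarrow> real set" where
  "learnset \<Gamma> = {s. 0 < s \<and> (\<exists>l. \<forall>X\<in>\<Gamma>. learns l s X)}"

end

theory Submission
  imports Defs "HOL-Library.Sublist"
begin

lemma space_unif[simp]: "space unif = UNIV"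
  by (simp add: unif_def space_PiM)
lemma length_pref[simp]: "length (pref Y i) = i"
  by (simp add: pref_def)
lemma nth_pref[simp]: "i < n \<Longrightarrow> pref Y n ! i = Y i"
  by (simp add: pref_def)
lemma pref_eq_iff: "pref Y (length w) = w \<longleftrightarrow> (\<forall>i<length w. Y i = w!i)"
proof
  assume "pref Y (length w) = w" then show "\<forall>i<length w. Y i = w!i" using nth_pref by metis
next
  assume "\<forall>i<length w. Y i = w!i" then show "pref Y (length w) = w"
    by (intro nth_equalityI) auto
qed
lemma cyl_emb: "cyl w = prod_emb UNIV (\<lambda>_. measure_pmf (bernoulli_pmf (1/2))) {..<length w}
   (Pi\<^sub>E {..<length w} (\<lambda>i. {w!i}))"
proof (rule set_eqI)
  fix Y :: "nat \<Rightarrow> bool"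
  have "Y \<in> cyl w \<longleftrightarrow> (\<forall>i<length w. Y i = w!i)"
    unfolding cyl_def using pref_eq_iff by simp
  moreover have "Y \<in> prod_emb UNIV (\<lambda>_. measure_pmf (bernoulli_pmf (1/2))) {..<length w}
   (Pi\<^sub>E {..<length w} (\<lambda>i. {w!i})) \<longleftrightarrow> (\<forall>i<length w. Y i = w!i)"
    unfolding prod_emb_def by (simp add: space_PiM PiE_iff del: ball_simps) (simp only: Ball_def lessThan_iff)
  ultimately show "Y \<in> cyl w \<longleftrightarrow> Y \<in> prod_emb UNIV (\<lambda>_. measure_pmf (bernoulli_pmf (1/2))) {..<length w}
   (Pi\<^sub>E {..<length w} (\<lambda>i. {w!i}))" by blast
qed
lemma cyl_sets: "cyl w \<in> sets unif"
  unfolding cyl_emb unif_def by (intro sets_PiM_I) auto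

lemma emeasure_cyl: "emeasure unif (cyl w) = ennreal ((1/2) ^ length w)"
proof -
  have "emeasure unif (cyl w) = (\<Prod>i\<in>{..<length w}. emeasure (measure_pmf (bernoulli_pmf (1/2))) {w!i})"
    unfolding cyl_emb unif_def
    by (rule emeasure_PiM_emb) (auto intro: prob_space_measure_pmf)
  also have "\<dots> = (\<Prod>i\<in>{..<length w}. ennreal (1/2))"
    by (intro prod.cong refl) (auto simp: emeasure_pmf_single)
  also have "\<dots> = ennreal (\<Prod>i\<in>{..<length w}. 1/2)"
    by (rule prod_ennreal) auto
  also have "\<dots> = ennreal ((1/2) ^ length w)"
    by (simp only: prod_constant card_lessThan)
  finally show ?thesis .
qed

definition cnt :: "(bool list \<Rightarrow> bool) \<Rightarrow> bool list \<Rightarrow> nat" where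
  "cnt l v = card {j. j \<le> length v \<and> l (take j v)}"

definition VV :: "(bool list \<Rightarrow> bool) \<Rightarrow> nat \<Rightarrow> nat \<Rightarrow> bool list set" where
  "VV l n i = {v. length v = i \<and> n \<le> cnt l v}"

lemma finite_len: "finite {v::bool list. length v = i}"
  using finite_lists_length_eq[of "UNIV::bool set" i] by simp

lemma card_len: "card {v::bool list. length v = i} = 2 ^ i"
  using card_lists_length_eq[of "UNIV::bool set" i] by simp

lemma finite_VV: "finite (VV l n i)"
  unfolding VV_def by (rule finite_subset[OF _ finite_len[of i]]) auto


lemma take_pref: "j \<le> i \<Longrightarrow> take j (pref Y i) = pref Y j"
  by (simp add: pref_def take_map)

lemma cnt_pref: "cnt l (pref Y i) = card ({j. l (pref Y j)} \<inter> {..i})"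
  unfolding cnt_def by (rule arg_cong[where f=card]) (auto simp: take_pref)

lemma nat_set_large: "(infinite S \<or> n \<le> card S) \<longleftrightarrow> (\<exists>i. n \<le> card (S \<inter> {..i::nat}))"
proof
  assume "infinite S \<or> n \<le> card S"
  then show "\<exists>i. n \<le> card (S \<inter> {..i::nat})"
  proof
    assume "infinite S"
    then obtain T where T: "T \<subseteq> S" "finite T" "card T = n"
      using infinite_arbitrarily_large by blast
    obtain i where "T \<subseteq> {..i}" using T(2) finite_nat_iff_bounded_le by auto
    then have "card T \<le> card (S \<inter> {..i})" using T by (intro card_mono) auto
    then show ?thesis using T by auto
  next
    assume a: "n \<le> card S"
    show ?thesis
    proof (cases "finite S")
      case True
      then obtain i where "S \<subseteq> {..i}" using finite_nat_iff_bounded_le by auto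
      then have "S \<inter> {..i} = S" by auto
      then show ?thesis using a by metis
    next
      case False
      then obtain T where T: "T \<subseteq> S" "finite T" "card T = n"
        using infinite_arbitrarily_large by blast
      obtain i where "T \<subseteq> {..i}" using T(2) finite_nat_iff_bounded_le by auto
      then have "card T \<le> card (S \<inter> {..i})" using T by (intro card_mono) auto
      then show ?thesis using T by auto
    qed
  qed
next
  assume "\<exists>i. n \<le> card (S \<inter> {..i::nat})"
  then obtain i where i: "n \<le> card (S \<inter> {..i})" by blast
  show "infinite S \<or> n \<le> card S"
  proof (cases "finite S")
    case True
    then have "card (S \<inter> {..i}) \<le> card S" by (intro card_mono) auto
    then show ?thesis using i by auto
  next
    case False
    then show ?thesis by simp
  qed
qed

lemma MCset_eq: "{Y. infinite {i. l (pref Y i)} \<or> n \<le> card {i. l (pref Y i)}}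
   = (\<Union>i. {Y. n \<le> cnt l (pref Y i)})"
  apply (rule set_eqI) subgoal for Y using nat_set_large[of "{i. l (pref Y i)}" n] by (simp add: cnt_pref) done

lemma level_eq: "{Y. n \<le> cnt l (pref Y i)} = (\<Union>v\<in>VV l n i. cyl v)"
  unfolding VV_def cyl_def by auto

lemma level_sets: "{Y. n \<le> cnt l (pref Y i)} \<in> sets unif"
  unfolding level_eq by (intro sets.finite_UN cyl_sets finite_VV)

lemma level_emeasure: "emeasure unif {Y. n \<le> cnt l (pref Y i)} = of_nat (card (VV l n i)) * ennreal ((1/2)^i)"
proof -
  have "emeasure unif (\<Union>v\<in>VV l n i. cyl v) = (\<Sum>v\<in>VV l n i. emeasure unif (cyl v))"
    using finite_VV
  proof (intro sum_emeasure[symmetric])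
    show "disjoint_family_on cyl (VV l n i)"
      by (auto simp: disjoint_family_on_def VV_def cyl_def)
    show "finite (VV l n i)" by (rule finite_VV)
    show "cyl ` VV l n i \<subseteq> sets unif" using cyl_sets by blast
  qed
  also have "\<dots> = (\<Sum>v\<in>VV l n i. ennreal ((1/2)^i))"
    by (intro sum.cong refl) (auto simp: emeasure_cyl VV_def)
  finally show ?thesis unfolding level_eq by simp
qed

lemma cnt_mono_pref: "cnt l (pref Y i) \<le> cnt l (pref Y (Suc i))"
  unfolding cnt_pref by (intro card_mono) auto

lemma MC_iff: "measure_condition l \<longleftrightarrow> (\<forall>n i. 2^n * card (VV l n i) \<le> (2::nat)^i)"
proof -
  have inc: "incseq (\<lambda>i. {Y. n \<le> cnt l (pref Y i)})" for n
    by (intro incseq_SucI) (auto intro: order_trans[OF _ cnt_mono_pref])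
  have eqm: "emeasure unif {Y. infinite {i. l (pref Y i)} \<or> n \<le> card {i. l (pref Y i)}}
     = (SUP i. of_nat (card (VV l n i)) * ennreal ((1/2)^i))" for n
    unfolding MCset_eq level_emeasure[symmetric]
    by (rule SUP_emeasure_incseq[symmetric]) (auto simp: level_sets inc)
  have key: "of_nat (card (VV l n i)) * ennreal ((1/2)^i) \<le> ennreal ((1/2)^n)
     \<longleftrightarrow> 2^n * card (VV l n i) \<le> (2::nat)^i" for n i
  proof -
    have "of_nat (card (VV l n i)) * ennreal ((1/2)^i) = ennreal (real (card (VV l n i)) * (1/2)^i)"
      by (simp add: ennreal_mult ennreal_of_nat_eq_real_of_nat)
    then have "(of_nat (card (VV l n i)) * ennreal ((1/2)^i) \<le> ennreal ((1/2)^n))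
       \<longleftrightarrow> real (card (VV l n i)) * (1/2)^i \<le> (1/2)^n"
      by (simp add: ennreal_le_iff)
    also have "\<dots> \<longleftrightarrow> real (2^n * card (VV l n i)) \<le> real (2^i)"
      by (simp add: field_simps power_divide)
    finally show ?thesis by linarith
  qed
  show ?thesis unfolding measure_condition_def eqm SUP_le_iff key by simp
qed



definition hit :: "ennreal \<Rightarrow> (bool list \<Rightarrow> ennreal) \<Rightarrow> bool list \<Rightarrow> bool" where
  "hit c d x \<longleftrightarrow> (\<exists>j\<le>length x. c \<le> d (take j x))"

definition GG :: "ennreal \<Rightarrow> (bool list \<Rightarrow> ennreal) \<Rightarrow> bool list \<Rightarrow> ennreal" where
  "GG c d x = (if hit c d x then c else d x)"

lemma hit_snoc: "hit c d (u @ [b]) \<longleftrightarrow> hit c d u \<or> c \<le> d (u @ [b])"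
proof
  assume "hit c d (u @ [b])"
  then obtain j where j: "j \<le> Suc (length u)" "c \<le> d (take j (u @ [b]))" unfolding hit_def by auto
  show "hit c d u \<or> c \<le> d (u @ [b])"
  proof (cases "j \<le> length u")
    case True
    then have "take j (u @ [b]) = take j u" by simp
    then show ?thesis using j True unfolding hit_def by auto
  next
    case False
    then have "j = Suc (length u)" using j by simp
    then show ?thesis using j by simp
  qed
next
  assume "hit c d u \<or> c \<le> d (u @ [b])"
  then show "hit c d (u @ [b])"
  proof
    assume "hit c d u"
    then obtain j where j: "j \<le> length u" "c \<le> d (take j u)" unfolding hit_def by auto
    then have "take j (u @ [b]) = take j u" by simp
    then show ?thesis using j unfolding hit_def by (intro exI[of _ j]) auto
  next
    assume "c \<le> d (u @ [b])"
    then show ?thesis unfolding hit_def by (intro exI[of _ "Suc (length u)"]) auto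
  qed
qed

lemma GG_step:
  assumes sm: "\<And>u. d (u @ [True]) + d (u @ [False]) \<le> 2 * d u"
  shows "GG c d (u @ [True]) + GG c d (u @ [False]) \<le> 2 * GG c d u"
proof (cases "hit c d u")
  case True
  then show ?thesis unfolding GG_def using hit_snoc by (simp add: mult_2)
next
  case False
  have le: "GG c d (u @ [b]) \<le> d (u @ [b])" for b
    using False unfolding GG_def by (auto simp: hit_snoc)
  have "GG c d (u @ [True]) + GG c d (u @ [False]) \<le> d (u @ [True]) + d (u @ [False])"
    by (intro add_mono le)
  also have "\<dots> \<le> 2 * d u" by (rule sm)
  finally show ?thesis using False unfolding GG_def by simp
qed

lemma len_Suc_eq: "{v::bool list. length v = Suc i} = (\<lambda>(xs, n). n#xs) ` ({xs. length xs = i} \<times> UNIV)"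
  using lists_length_Suc_eq[of "UNIV::bool set" i] by simp

lemma sum_len_Suc: "(\<Sum>v\<in>{v::bool list. length v = Suc i}. f v) =
   (\<Sum>xs\<in>{xs. length xs = i}. f (True # xs)) + (\<Sum>xs\<in>{xs. length xs = i}. f (False # xs))"
proof -
  have inj: "inj_on (\<lambda>(xs, n). n#xs) ({xs::bool list. length xs = i} \<times> UNIV)"
    by (auto simp: inj_on_def)
  have "(\<Sum>v\<in>{v::bool list. length v = Suc i}. f v) = (\<Sum>p\<in>{xs::bool list. length xs = i} \<times> UNIV. f ((\<lambda>(xs, n). n#xs) p))"
    unfolding len_Suc_eq by (rule sum.reindex[OF inj, unfolded comp_def])
  also have "\<dots> = (\<Sum>xs\<in>{xs. length xs = i}. \<Sum>n\<in>UNIV. f (n # xs))"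
    unfolding sum.cartesian_product by (intro sum.cong refl) auto
  also have "\<dots> = (\<Sum>xs\<in>{xs. length xs = i}. f (True # xs) + f (False # xs))"
    by (simp add: UNIV_bool add.commute)
  finally show ?thesis by (simp add: sum.distrib)
qed

lemma ville_sum:
  assumes sm: "\<And>u. d (u @ [True]) + d (u @ [False]) \<le> 2 * d u"
  shows "(\<Sum>v\<in>{v::bool list. length v = i}. GG c d (u @ v)) \<le> 2 ^ i * GG c d u"
proof (induction i arbitrary: u)
  case 0
  then show ?case by simp
next
  case (Suc i)
  have "(\<Sum>v\<in>{v::bool list. length v = Suc i}. GG c d (u @ v)) =
    (\<Sum>xs\<in>{xs. length xs = i}. GG c d ((u @ [True]) @ xs)) + (\<Sum>xs\<in>{xs. length xs = i}. GG c d ((u @ [False]) @ xs))"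
    by (simp add: sum_len_Suc)
  also have "\<dots> \<le> 2 ^ i * GG c d (u @ [True]) + 2 ^ i * GG c d (u @ [False])"
    by (intro add_mono Suc.IH)
  also have "\<dots> = 2 ^ i * (GG c d (u @ [True]) + GG c d (u @ [False]))"
    by (simp add: distrib_left)
  also have "\<dots> \<le> 2 ^ i * (2 * GG c d u)"
    by (intro mult_left_mono GG_step sm) simp
  also have "\<dots> = 2 ^ Suc i * GG c d u" by (simp add: mult_ac)
  finally show ?case .
qed

lemma ville_count:
  assumes sm: "\<And>u. d (u @ [True]) + d (u @ [False]) \<le> 2 * d u"
  shows "of_nat (card {v::bool list. length v = i \<and> hit c d v}) * c \<le> 2 ^ i * d []"
proof -
  let ?A = "{v::bool list. length v = i}"
  let ?B = "{v::bool list. length v = i \<and> hit c d v}"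
  have fin: "finite ?A" by (rule finite_len)
  have sub: "?B \<subseteq> ?A" by auto
  have "of_nat (card ?B) * c = (\<Sum>v\<in>?B. c)" by simp
  also have "\<dots> = (\<Sum>v\<in>?B. GG c d v)"
    by (intro sum.cong refl) (simp add: GG_def)
  also have "\<dots> \<le> (\<Sum>v\<in>?A. GG c d v)"
    by (intro sum_mono2 fin sub) simp
  also have "\<dots> \<le> 2 ^ i * GG c d []"
    using ville_sum[OF sm, where i=i and c=c and u="[]"] by simp
  also have "GG c d [] \<le> d []"
    by (simp add: GG_def hit_def)
  finally show ?thesis by (simp add: mult_left_mono)
qed



primrec Cr :: "(bool list \<Rightarrow> ennreal) \<Rightarrow> bool list \<Rightarrow> nat" where
  "Cr d [] = 0"
| "Cr d (b # r) = (if 2 ^ (Cr d r + 1) \<le> d (rev (b # r)) then Cr d r + 1 else Cr d r)"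

definition CC :: "(bool list \<Rightarrow> ennreal) \<Rightarrow> bool list \<Rightarrow> nat" where
  "CC d u = Cr d (rev u)"

definition ll :: "(bool list \<Rightarrow> ennreal) \<Rightarrow> bool list \<Rightarrow> bool" where
  "ll d u \<longleftrightarrow> u \<noteq> [] \<and> 2 ^ (CC d (butlast u) + 1) \<le> d u"

lemma CC_Nil[simp]: "CC d [] = 0" by (simp add: CC_def)
lemma ll_Nil[simp]: "\<not> ll d []" by (simp add: ll_def)
lemma ll_snoc: "ll d (u @ [b]) \<longleftrightarrow> 2 ^ (CC d u + 1) \<le> d (u @ [b])"
  by (simp add: ll_def)
lemma CC_snoc: "CC d (u @ [b]) = CC d u + (if ll d (u @ [b]) then 1 else 0)"
  by (simp add: CC_def ll_snoc)

lemma cnt_Nil: "cnt l [] = (if l [] then 1 else 0)"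
proof -
  have "{j. j \<le> length ([]::bool list) \<and> l (take j [])} = (if l [] then {0} else {})" by auto
  then show ?thesis unfolding cnt_def by simp
qed

lemma cnt_snoc: "cnt l (u @ [b]) = cnt l u + (if l (u @ [b]) then 1 else 0)"
proof -
  have eq: "{j. j \<le> length (u @ [b]) \<and> l (take j (u @ [b]))} =
     {j. j \<le> length u \<and> l (take j u)} \<union> (if l (u @ [b]) then {Suc (length u)} else {})"
    by (auto simp: le_Suc_eq)
  have fin: "finite {j. j \<le> length u \<and> l (take j u)}" by simp
  show ?thesis unfolding cnt_def eq using fin by auto
qed

lemma cnt_ll: "cnt (ll d) u = CC d u"
  by (induction u rule: rev_induct) (auto simp: cnt_Nil cnt_snoc CC_snoc)

lemma CC_hit: "1 \<le> n \<Longrightarrow> n \<le> CC d u \<Longrightarrow> hit (2 ^ n) d u"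
proof (induction u rule: rev_induct)
  case Nil
  then show ?case by simp
next
  case (snoc b u)
  show ?case
  proof (cases "n \<le> CC d u")
    case True
    then show ?thesis using snoc by (simp add: hit_snoc)
  next
    case False
    then have "ll d (u @ [b])" "n = CC d u + 1" using snoc.prems by (auto simp: CC_snoc split: if_splits)
    then show ?thesis by (simp add: hit_snoc ll_snoc)
  qed
qed

lemma CC_upper:
  assumes d0: "d [] < 2" and step: "\<And>u b. d (u @ [b]) \<le> 2 * d u"
  shows "d u < 2 ^ (CC d u + 1)"
proof (induction u rule: rev_induct)
  case Nil
  then show ?case using d0 by simp
next
  case (snoc b u)
  show ?case
  proof (cases "ll d (u @ [b])")
    case True
    have "d (u @ [b]) \<le> 2 * d u" by (rule step)
    also have "\<dots> < 2 * 2 ^ (CC d u + 1)"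
      using snoc.IH by (intro ennreal_mult_strict_left_mono) auto
    finally have a: "d (u @ [b]) < 2 * 2 ^ (CC d u + 1)" .
    have eq: "CC d (u@[b]) + 1 = Suc (CC d u + 1)" using True by (simp add: CC_snoc)
    show ?thesis using a by (simp only: eq power_Suc)
  next
    case False
    have a: "d (u@[b]) < 2^(CC d u + 1)" using False by (simp add: ll_snoc not_le)
    have eq: "CC d (u@[b]) = CC d u" using False by (simp add: CC_snoc)
    show ?thesis by (subst eq) (rule a)
  qed
qed

lemma ll_MC:
  assumes sm: "\<And>u. d (u @ [True]) + d (u @ [False]) \<le> 2 * d u" and d0: "d [] \<le> 1"
  shows "measure_condition (ll d)"
  unfolding MC_iff
proof (intro allI)
  fix n i :: nat
  show "2 ^ n * card (VV (ll d) n i) \<le> 2 ^ i"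
  proof (cases "n = 0")
    case True
    have "card (VV (ll d) n i) \<le> card {v::bool list. length v = i}"
      by (intro card_mono finite_len) (auto simp: VV_def)
    then show ?thesis using True card_len by simp
  next
    case False
    have sub: "VV (ll d) n i \<subseteq> {v. length v = i \<and> hit (2 ^ n) d v}"
      using CC_hit[of n] False by (auto simp: VV_def cnt_ll)
    have fin: "finite {v::bool list. length v = i \<and> hit (2 ^ n) d v}"
      by (rule finite_subset[OF _ finite_len[of i]]) auto
    have "of_nat (card (VV (ll d) n i)) * (2 ^ n :: ennreal)
        \<le> of_nat (card {v::bool list. length v = i \<and> hit (2 ^ n) d v}) * 2 ^ n"
      by (intro mult_right_mono) (auto intro: card_mono[OF fin sub])
    also have "\<dots> \<le> 2 ^ i * d []" by (rule ville_count[OF sm])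
    also have "\<dots> \<le> 2 ^ i" using d0 by (metis mult.right_neutral mult_left_mono zero_le)
    finally have "of_nat (card (VV (ll d) n i)) * (2 ^ n :: ennreal) \<le> 2 ^ i" .
    then have "of_nat (2 ^ n * card (VV (ll d) n i)) \<le> (of_nat (2 ^ i) :: ennreal)"
      by (simp add: mult.commute)
    then show ?thesis by (simp only: of_nat_le_iff)
  qed
qed



definition ee :: "real \<Rightarrow> bool list \<Rightarrow> bool list \<Rightarrow> ennreal" where
  "ee t w u = (if prefix w u \<or> prefix u w
     then ennreal (2 powr (real (min (length u) (length w)) - t * real (length w))) else 0)"

lemma prefix_snoc_long: "prefix u w \<Longrightarrow> length u < length w \<Longrightarrow> prefix (u @ [b]) w \<longleftrightarrow> w ! length u = b"
proof -
  assume a: "prefix u w" "length u < length w"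
  then obtain zs where w: "w = u @ zs" by (auto simp: prefix_def)
  with a obtain z zs' where "zs = z # zs'" by (cases zs) auto
  then show ?thesis using w by (auto simp: nth_append)
qed

lemma ee_snoc:
  "ee t w (u @ [b]) = (if prefix w u then ee t w u
      else if prefix u w \<and> w ! length u = b then 2 * ee t w u else 0)"
proof (cases "prefix w u")
  case True
  then have "prefix w (u @ [b])" by (simp add: prefix_snoc)
  moreover have "length w \<le> length u" using True prefix_length_le by blast
  ultimately show ?thesis using True by (simp add: ee_def min_def)
next
  case nwu: False
  show ?thesis
  proof (cases "prefix u w")
    case True
    have lt: "length u < length w"
    proof (rule ccontr)
      assume "\<not> length u < length w"
      then have "length u = length w" using prefix_length_le[OF True] by simp
      then have "u = w" using True by (auto simp: prefix_def)
      then show False using nwu by simp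
    qed
    show ?thesis
    proof (cases "w ! length u = b")
      case True
      have p: "prefix (u @ [b]) w" using prefix_snoc_long[OF \<open>prefix u w\<close> lt] True by simp
      have m1: "min (length (u @ [b])) (length w) = length u + 1" using lt by simp
      have m2: "min (length u) (length w) = length u" using lt by simp
      have "2 powr (real (length u + 1) - t * real (length w)) = 2 powr (1 + (real (length u) - t * real (length w)))"
        by (simp add: algebra_simps)
      also have "\<dots> = 2 * 2 powr (real (length u) - t * real (length w))"
        by (simp add: powr_add)
      finally have "2 powr (real (length u + 1) - t * real (length w)) = 2 * 2 powr (real (length u) - t * real (length w))" .
      then show ?thesis using p nwu \<open>prefix u w\<close> True m1 m2
        by (simp add: ee_def ennreal_mult)
    next
      case False
      have "\<not> prefix (u @ [b]) w" using prefix_snoc_long[OF \<open>prefix u w\<close> lt] False by simp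
      moreover have "\<not> prefix w (u @ [b])"
      proof
        assume "prefix w (u @ [b])"
        then have "w = u @ [b]" using nwu by (simp add: prefix_snoc)
        then show False using False by simp
      qed
      ultimately show ?thesis using nwu False by (simp add: ee_def)
    qed
  next
    case False
    have "\<not> prefix (u @ [b]) w" using False by (meson prefix_order.dual_order.trans prefixI)
    moreover have "\<not> prefix w (u @ [b])"
      using nwu False by (auto simp: prefix_snoc)
    ultimately show ?thesis using nwu False by (simp add: ee_def)
  qed
qed

lemma ee_zero: "\<not> prefix w u \<Longrightarrow> \<not> prefix u w \<Longrightarrow> ee t w u = 0"
  by (simp add: ee_def)

lemma ee_mart: "ee t w (u @ [True]) + ee t w (u @ [False]) = 2 * ee t w u"
  by (cases "w ! length u") (auto simp: ee_snoc mult_2 ee_zero)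

definition dd :: "real \<Rightarrow> (nat \<Rightarrow> nat \<Rightarrow> bool list) \<Rightarrow> bool list \<Rightarrow> ennreal" where
  "dd t W u = (\<Sum>m. \<Sum>k. ee t (W m k) u)"

lemma dd_mart: "dd t W (u @ [True]) + dd t W (u @ [False]) = 2 * dd t W u"
proof -
  have "dd t W (u @ [True]) + dd t W (u @ [False]) =
     (\<Sum>m. (\<Sum>k. ee t (W m k) (u @ [True])) + (\<Sum>k. ee t (W m k) (u @ [False])))"
    unfolding dd_def by (rule suminf_add) (auto intro: summableI)
  also have "\<dots> = (\<Sum>m. (\<Sum>k. ee t (W m k) (u @ [True]) + ee t (W m k) (u @ [False])))"
    by (intro suminf_cong suminf_add) (auto intro: summableI)
  also have "\<dots> = (\<Sum>m. (\<Sum>k. 2 * ee t (W m k) u))"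
    by (simp add: ee_mart)
  also have "\<dots> = 2 * dd t W u" by (simp add: dd_def)
  finally show ?thesis .
qed

lemma ennreal_le_suminf: "f i \<le> (\<Sum>k. f k :: ennreal)"
  using ennreal_suminf_lessD[of f "f i" i] by (metis not_le order_less_irrefl)

lemma dd_hit: "ee t (W m k) u \<le> dd t W u"
proof -
  have "ee t (W m k) u \<le> (\<Sum>k. ee t (W m k) u)" by (rule ennreal_le_suminf)
  also have "\<dots> \<le> dd t W u" unfolding dd_def by (rule ennreal_le_suminf)
  finally show ?thesis .
qed

lemma ee_self: "ee t w w = ennreal (2 powr ((1 - t) * real (length w)))"
  by (simp add: ee_def algebra_simps)

lemma ee_Nil: "ee t w [] = ennreal (2 powr (- t * real (length w)))"
  by (simp add: ee_def)

lemma sum_half: "(\<Sum>m. ennreal ((1/2) ^ Suc m)) = 1"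
proof -
  have "(\<Sum>m. ennreal ((1/2) ^ Suc m)) = ennreal (\<Sum>m. (1/2) ^ Suc m)"
    using power_half_series by (intro suminf_ennreal2) (auto simp: sums_iff)
  also have "(\<Sum>m. (1/2::real) ^ Suc m) = 1" using power_half_series by (simp add: sums_iff)
  finally show ?thesis by simp
qed




lemma AVG_cnt: "AVG l w = real (cnt l w) / real (length w)"
proof -
  have "(\<Sum>i\<in>{0..length w}. (if l (take i w) then 1 else 0::real)) = real (card ({0..length w} \<inter> {i. l (take i w)}))"
    by (simp add: sum.If_cases)
  also have "{0..length w} \<inter> {i. l (take i w)} = {j. j \<le> length w \<and> l (take j w)}" by auto
  finally show ?thesis unfolding AVG_def cnt_def by simp
qed

lemma limsup_ge_freq:
  fixes f :: "nat \<Rightarrow> real"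
  assumes Q: "\<And>m. 1 \<le> m \<Longrightarrow> \<exists>N\<ge>m. f N \<ge> c - 1 / real m"
  shows "ereal c \<le> limsup (\<lambda>n. ereal (f n))"
  unfolding limsup_INF_SUP
proof (rule INF_greatest)
  fix n :: nat
  show "ereal c \<le> (SUP m\<in>{n..}. ereal (f m))"
  proof (rule ereal_le_epsilon2)
    fix e :: real assume e: "0 < e"
    obtain m0 :: nat where m0: "1 / e < real m0" using reals_Archimedean2 by blast
    define m where "m = max (max n m0) 1"
    have m1: "1 \<le> m" and mn: "n \<le> m" and mm0: "m0 \<le> m" by (auto simp: m_def)
    have "1 / real m \<le> e"
    proof -
      have "1 / e < real m" using m0 mm0 by linarith
      then show ?thesis using e m1 by (simp add: field_simps)
    qed
    obtain N where N: "N \<ge> m" "f N \<ge> c - 1 / real m" using Q[OF m1] by blast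
    then have "c \<le> f N + e" using \<open>1 / real m \<le> e\<close> by linarith
    then have "ereal c \<le> ereal (f N) + ereal e" by simp
    also have "ereal (f N) \<le> (SUP m\<in>{n..}. ereal (f m))"
      using N mn by (intro SUP_upper) auto
    finally show "ereal c \<le> (SUP m\<in>{n..}. ereal (f m)) + ereal e" by (simp add: add_right_mono)
  qed
qed

lemma dir2:
  assumes t: "0 < t" and H: "hausdorff_measure t \<Gamma> = 0"
  shows "t \<in> learnset \<Gamma>"
proof -
  have pre0: "hausdorff_pre t m \<Gamma> = 0" for m
    using H unfolding hausdorff_measure_def by (metis SUP_upper UNIV_I le_zero_eq)
  have "\<exists>W. (\<forall>k. m \<le> length (W k)) \<and> \<Gamma> \<subseteq> (\<Union>k. cyl (W k)) \<and>
      (\<Sum>k. ennreal (2 powr (- t * real (length (W k))))) < ennreal ((1/2) ^ Suc m)" for m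
  proof -
    have "hausdorff_pre t m \<Gamma> < ennreal ((1/2) ^ Suc m)" using pre0 by simp
    then show ?thesis unfolding hausdorff_pre_def INF_less_iff by auto
  qed
  then obtain Wc where Wc: "\<And>m. (\<forall>k. m \<le> length (Wc m k)) \<and> \<Gamma> \<subseteq> (\<Union>k. cyl (Wc m k)) \<and>
      (\<Sum>k. ennreal (2 powr (- t * real (length (Wc m k))))) < ennreal ((1/2) ^ Suc m)"
    by metis
  define d where "d = dd t Wc"
  have d0: "d [] \<le> 1"
  proof -
    have "d [] = (\<Sum>m. \<Sum>k. ennreal (2 powr (- t * real (length (Wc m k)))))"
      unfolding d_def dd_def by (simp add: ee_Nil)
    also have "\<dots> \<le> (\<Sum>m. ennreal ((1/2) ^ Suc m))"
      using Wc by (intro suminf_le) (auto intro: summableI less_imp_le)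
    also have "\<dots> = 1" by (rule sum_half)
    finally show ?thesis .
  qed
  have sm: "d (u @ [True]) + d (u @ [False]) \<le> 2 * d u" for u
    unfolding d_def by (simp add: dd_mart)
  have step: "d (u @ [b]) \<le> 2 * d u" for u b
  proof -
    have "d (u @ [b]) \<le> d (u @ [True]) + d (u @ [False])"
      by (cases b) (simp_all add: add_increasing2 add_increasing)
    then show ?thesis using sm order_trans by blast
  qed
  have dl2: "d [] < 2" using d0 by (metis le_less_trans one_less_numeral_iff semiring_norm(76))
  define l where "l = ll d"
  have mc: "measure_condition l" unfolding l_def by (rule ll_MC[OF sm d0])
  have learn: "learns l t X" if X: "X \<in> \<Gamma>" for X
  proof -
    have Q: "\<exists>N\<ge>m. AVG l (pref X N) \<ge> (1 - t) - 1 / real m" if m1: "1 \<le> m" for m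
    proof -
      obtain k where k: "X \<in> cyl (Wc m k)" using Wc[of m] X by blast
      define N where "N = length (Wc m k)"
      have Nm: "m \<le> N" using Wc[of m] N_def by blast
      have pX: "pref X N = Wc m k" using k unfolding cyl_def N_def by simp
      have "ennreal (2 powr ((1 - t) * real N)) = ee t (Wc m k) (Wc m k)"
        by (simp add: ee_self N_def)
      also have "\<dots> \<le> d (pref X N)" unfolding pX d_def by (rule dd_hit)
      also have "\<dots> < 2 ^ (CC d (pref X N) + 1)" by (rule CC_upper[OF dl2 step])
      also have "\<dots> = ennreal (2 ^ (CC d (pref X N) + 1))"
        by (metis ennreal_numeral ennreal_power zero_le_numeral)
      also have "\<dots> = ennreal (2 powr real (CC d (pref X N) + 1))"
        by (subst powr_realpow) auto
      finally have "2 powr ((1 - t) * real N) < 2 powr real (CC d (pref X N) + 1)"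
        by (simp add: ennreal_less_iff)
      then have lt: "(1 - t) * real N < real (CC d (pref X N)) + 1" by simp
      have N0: "0 < real N" using Nm m1 by simp
      have avg: "AVG l (pref X N) = real (CC d (pref X N)) / real N"
        unfolding AVG_cnt l_def cnt_ll by simp
      have a1: "(1 - t) * real N - 1 \<le> real (CC d (pref X N))" using lt by linarith
      have a2: "((1 - t) * real N - 1) / real N \<le> real (CC d (pref X N)) / real N"
        using a1 N0 by (simp add: divide_right_mono)
      have a3: "((1 - t) * real N - 1) / real N = (1 - t) - 1 / real N"
        using N0 by (simp add: field_simps)
      have "(1 - t) - 1 / real N \<le> AVG l (pref X N)"
        using a2 a3 unfolding avg by simp
      moreover have "1 / real N \<le> 1 / real m" using Nm m1 by (simp add: frac_le)
      ultimately show ?thesis using Nm by (intro exI[of _ N]) auto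
    qed
    show ?thesis unfolding learns_def using mc limsup_ge_freq[OF Q] by auto
  qed
  show ?thesis unfolding learnset_def using t learn by blast
qed



lemma sum_distinct_nth:
  fixes g :: "'a \<Rightarrow> 'b::comm_monoid_add"
  assumes "distinct xs"
  shows "(\<Sum>j<length xs. g (xs ! j)) = (\<Sum>v\<in>set xs. g v)"
proof -
  have "(\<Sum>v\<in>set xs. g v) = sum_list (map g xs)" by (rule sum.distinct_set_conv_list[OF assms])
  also have "\<dots> = (\<Sum>j = 0..<length xs. map g xs ! j)" using sum_list_sum_nth[of "map g xs"] by simp
  also have "\<dots> = (\<Sum>j<length xs. g (xs ! j))" by (simp add: atLeast0LessThan)
  finally show ?thesis by simp
qed

lemma powr_neg_half: "2 powr (- real (n::nat)) = (1/2::real) ^ n"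
  by (simp add: powr_minus powr_realpow power_one_over inverse_eq_divide)

lemma geom_ennreal: "0 \<le> x \<Longrightarrow> x < 1 \<Longrightarrow> (\<Sum>n. ennreal (x ^ n)) = ennreal (1 / (1 - x))"
proof -
  assume x: "0 \<le> x" "x < 1"
  have s: "summable (\<lambda>n. x ^ n)" using x by (intro summable_geometric) simp
  have "(\<Sum>n. ennreal (x ^ n)) = ennreal (\<Sum>n. x ^ n)"
    using s x by (intro suminf_ennreal2) auto
  also have "(\<Sum>n. x ^ n) = 1 / (1 - x)" using x by (intro suminf_geometric) simp
  finally show ?thesis .
qed

lemma card_weight_bound:
  assumes mc: "measure_condition l" and rt: "r < t"
  shows "real (card {v. length v = N \<and> (1 - r) * real N \<le> real (cnt l v)}) * 2 powr (- t * real N)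
     \<le> (2 powr (r - t)) ^ N"
proof -
  define k where "k = nat \<lceil>(1 - r) * real N\<rceil>"
  have kge: "(1 - r) * real N \<le> real k" unfolding k_def by linarith
  have sub: "{v. length v = N \<and> (1 - r) * real N \<le> real (cnt l v)} \<subseteq> VV l k N"
  proof
    fix v assume v: "v \<in> {v. length v = N \<and> (1 - r) * real N \<le> real (cnt l v)}"
    then have "\<lceil>(1 - r) * real N\<rceil> \<le> int (cnt l v)" by (simp add: ceiling_le_iff)
    then have "k \<le> cnt l v" unfolding k_def by linarith
    then show "v \<in> VV l k N" using v by (simp add: VV_def)
  qed
  have c1: "card {v. length v = N \<and> (1 - r) * real N \<le> real (cnt l v)} \<le> card (VV l k N)"
    by (intro card_mono finite_VV sub)
  have c2: "2 ^ k * card (VV l k N) \<le> 2 ^ N" using mc unfolding MC_iff by blast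
  let ?c = "real (card {v. length v = N \<and> (1 - r) * real N \<le> real (cnt l v)})"
  have "?c * 2 ^ k \<le> 2 ^ N"
  proof -
    have "?c * 2 ^ k \<le> real (card (VV l k N)) * 2 ^ k" using c1 by simp
    also have "\<dots> = real (2 ^ k * card (VV l k N))" by simp
    also have "\<dots> \<le> real (2 ^ N)" using c2 by linarith
    finally show ?thesis by simp
  qed
  then have "?c * 2 powr real k \<le> 2 powr real N" by (simp add: powr_realpow)
  then have "?c \<le> 2 powr real N / 2 powr real k" by (simp add: field_simps)
  also have "\<dots> = 2 powr (real N - real k)" by (simp add: powr_diff)
  finally have cb: "?c \<le> 2 powr (real N - real k)" .
  have "?c * 2 powr (- t * real N) \<le> 2 powr (real N - real k) * 2 powr (- t * real N)"
    using cb by (intro mult_right_mono) auto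
  also have "\<dots> = 2 powr (real N - real k - t * real N)" by (simp add: powr_add[symmetric])
  also have "\<dots> \<le> 2 powr ((r - t) * real N)"
    using kge by (intro powr_mono) (auto simp: algebra_simps)
  also have "\<dots> = (2 powr (r - t)) ^ N"
    by (simp add: powr_powr[symmetric] powr_realpow)
  finally show ?thesis .
qed

lemma pre_bound:
  assumes mc: "measure_condition l" and rt: "r < t" and t0: "0 < t" and M1: "1 \<le> M" and nM: "n \<le> M"
    and freq: "\<And>X. X \<in> \<Gamma> \<Longrightarrow> \<exists>N\<ge>M. (1 - r) * real N \<le> real (cnt l (pref X N))"
  shows "hausdorff_pre t n \<Gamma> \<le> ennreal ((2 powr (r - t)) ^ M * (1 / (1 - 2 powr (r - t))) + 4 * (1/2) ^ M)"
proof -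
  define q where "q = 2 powr (r - t)"
  have q0: "0 \<le> q" by (simp add: q_def)
  have "2 powr (r - t) < 2 powr 0" using rt by (intro powr_less_mono) auto
  then have q1: "q < 1" by (simp add: q_def)
  define V where "V N' = {v. length v = N' \<and> (1 - r) * real N' \<le> real (cnt l v)}" for N'
  have finV: "finite (V N')" for N'
    unfolding V_def by (rule finite_subset[OF _ finite_len[of N']]) auto
  define xs where "xs N = (SOME xs. distinct xs \<and> set xs = V (M + N))" for N
  have xs: "distinct (xs N) \<and> set (xs N) = V (M + N)" for N
    unfolding xs_def by (rule someI_ex) (use finite_distinct_list[OF finV] in blast)
  define P where "P N j = M + nat \<lceil>real (N + j + M) / t\<rceil>" for N j :: nat
  define F where "F p = (case p of (N, j) \<Rightarrow> if j < length (xs N) then xs N ! j else replicate (P N j) False)" for p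
  define W where "W k = F (prod_decode k)" for k
  define g where "g w = ennreal (2 powr (- t * real (length w)))" for w :: "bool list"
  have lenF: "n \<le> length (F p)" for p
  proof -
    obtain N j where p: "p = (N, j)" by (cases p)
    show ?thesis
    proof (cases "j < length (xs N)")
      case True
      then have "xs N ! j \<in> V (M + N)" using xs[of N] nth_mem by blast
      then show ?thesis using True nM by (simp add: F_def p V_def)
    next
      case False
      then show ?thesis using nM by (simp add: F_def p P_def)
    qed
  qed
  have cover: "\<Gamma> \<subseteq> (\<Union>k. cyl (W k))"
  proof
    fix X assume X: "X \<in> \<Gamma>"
    obtain N' where N': "N' \<ge> M" "(1 - r) * real N' \<le> real (cnt l (pref X N'))" using freq[OF X] by blast
    define N where "N = N' - M"
    have NN: "M + N = N'" using N' N_def by simp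
    have "pref X N' \<in> V (M + N)" using N' NN by (simp add: V_def)
    then have "pref X N' \<in> set (xs N)" using xs by blast
    then obtain j where j: "j < length (xs N)" "xs N ! j = pref X N'" by (metis in_set_conv_nth)
    have "W (prod_encode (N, j)) = pref X N'" using j by (simp add: W_def F_def)
    moreover have "X \<in> cyl (pref X N')" by (simp add: cyl_def)
    ultimately show "X \<in> (\<Union>k. cyl (W k))" by (metis UN_iff UNIV_I)
  qed
  define A where "A N j = (if j < length (xs N) then g (xs N ! j) else 0)" for N j
  define B where "B N j = ennreal ((1/2) ^ M * ((1/2) ^ N * (1/2) ^ j))" for N j :: nat
  have gF: "g (F (N, j)) \<le> A N j + B N j" for N j
  proof (cases "j < length (xs N)")
    case True
    then show ?thesis by (simp add: F_def A_def)
  next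
    case False
    have c: "real (N + j + M) / t \<le> real (nat \<lceil>real (N + j + M) / t\<rceil>)" by linarith
    have c2: "real (N + j + M) \<le> real (nat \<lceil>real (N + j + M) / t\<rceil>) * t"
      using c t0 by (simp only: divide_le_eq)
    have c3: "real (nat \<lceil>real (N + j + M) / t\<rceil>) * t \<le> real (P N j) * t"
      using t0 by (intro mult_right_mono) (auto simp: P_def)
    have "real (N + j + M) \<le> t * real (P N j)" using c2 c3 by (simp add: mult.commute)
    then have "2 powr (- t * real (P N j)) \<le> 2 powr (- real (N + j + M))"
      by (intro powr_mono) auto
    also have "\<dots> = (1/2) ^ M * ((1/2) ^ N * (1/2) ^ j)"
      unfolding powr_neg_half by (simp add: power_add mult_ac)
    finally have "g (F (N, j)) \<le> B N j" using False by (simp add: F_def g_def B_def)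
    then show ?thesis by (simp add: add_increasing)
  qed
  have sumA: "(\<Sum>j. A N j) \<le> ennreal (q ^ (M + N))" for N
  proof -
    have "(\<Sum>j. A N j) = (\<Sum>j<length (xs N). A N j)"
      by (rule suminf_finite) (auto simp: A_def)
    also have "\<dots> = (\<Sum>j<length (xs N). g (xs N ! j))" by (simp add: A_def)
    also have "\<dots> = (\<Sum>v\<in>V (M + N). g v)" using xs sum_distinct_nth by metis
    also have "\<dots> = (\<Sum>v\<in>V (M + N). ennreal (2 powr (- t * real (M + N))))"
      by (intro sum.cong refl) (simp add: g_def V_def)
    also have "\<dots> = ennreal (real (card (V (M + N))) * 2 powr (- t * real (M + N)))"
      by (simp add: ennreal_mult ennreal_of_nat_eq_real_of_nat)
    also have "\<dots> \<le> ennreal (q ^ (M + N))"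
      using card_weight_bound[OF mc rt, of "M + N"] unfolding V_def q_def by (intro ennreal_leI)
    finally show ?thesis .
  qed
  have half: "(\<Sum>j. ennreal ((1/2::real) ^ j)) = 2"
  proof -
    have "(\<Sum>j. ennreal ((1/2::real) ^ j)) = ennreal (1 / (1 - 1/2))" by (rule geom_ennreal) auto
    also have "ennreal (1 / (1 - 1/2::real)) = 2" by simp
    finally show ?thesis .
  qed
  have sumB: "(\<Sum>j. B N j) = ennreal ((1/2) ^ M * (1/2) ^ N) * 2" for N
  proof -
    have "(\<Sum>j. B N j) = (\<Sum>j. ennreal ((1/2) ^ M * (1/2) ^ N) * ennreal ((1/2) ^ j))"
      unfolding B_def by (simp add: ennreal_mult mult.assoc)
    also have "\<dots> = ennreal ((1/2) ^ M * (1/2) ^ N) * 2" by (simp add: half)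
    finally show ?thesis .
  qed
  have "(\<Sum>k. g (W k)) = (\<Sum>N. \<Sum>j. g (F (N, j)))"
    unfolding W_def by (rule suminf_ennreal_2dimen[where f = "\<lambda>p. g (F p)"]) simp
  also have "\<dots> \<le> (\<Sum>N. \<Sum>j. A N j + B N j)"
    by (intro suminf_le gF) (auto intro: summableI)
  also have "\<dots> = (\<Sum>N. (\<Sum>j. A N j) + (\<Sum>j. B N j))"
    by (intro suminf_cong suminf_add[symmetric]) (auto intro: summableI)
  also have "\<dots> \<le> (\<Sum>N. ennreal (q ^ M) * ennreal (q ^ N) + ennreal (2 * (1/2) ^ M) * ennreal ((1/2) ^ N))"
  proof (intro suminf_le add_mono)
    fix N
    show "(\<Sum>j. A N j) \<le> ennreal (q ^ M) * ennreal (q ^ N)"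
      using sumA[of N] q0 by (simp add: ennreal_mult[symmetric] power_add)
    show "(\<Sum>j. B N j) \<le> ennreal (2 * (1/2) ^ M) * ennreal ((1/2) ^ N)"
    proof -
      have "ennreal (2 * (1/2) ^ M) * ennreal ((1/2) ^ N) = ennreal (2 * ((1/2::real) ^ M * (1/2) ^ N))"
        by (subst ennreal_mult[symmetric]) (auto simp: mult_ac)
      also have "\<dots> = ennreal 2 * ennreal ((1/2::real) ^ M * (1/2) ^ N)"
        by (rule ennreal_mult) auto
      finally show ?thesis unfolding sumB by (simp add: mult.commute)
    qed
  qed (auto intro: summableI)
  also have "\<dots> = ennreal (q ^ M) * (\<Sum>N. ennreal (q ^ N)) + ennreal (2 * (1/2) ^ M) * (\<Sum>N. ennreal ((1/2) ^ N))"
    by (subst suminf_add[symmetric]) (auto intro: summableI)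
  also have "\<dots> = ennreal (q ^ M * (1 / (1 - q)) + 4 * (1/2) ^ M)"
  proof -
    have e1: "ennreal (q ^ M) * ennreal (1 / (1 - q)) = ennreal (q ^ M * (1 / (1 - q)))"
      using q0 q1 by (subst ennreal_mult) auto
    have e2: "ennreal (2 * (1/2) ^ M) * 2 = ennreal (4 * (1/2::real) ^ M)"
    proof -
      have "ennreal (2 * (1/2) ^ M) * 2 = ennreal (2 * (1/2) ^ M) * ennreal 2" by simp
      also have "\<dots> = ennreal (2 * (1/2::real) ^ M * 2)" by (subst ennreal_mult) auto
      finally show ?thesis by simp
    qed
    have e3: "ennreal (q ^ M * (1 / (1 - q))) + ennreal (4 * (1/2::real) ^ M) = ennreal (q ^ M * (1 / (1 - q)) + 4 * (1/2) ^ M)"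
      using q0 q1 by (subst ennreal_plus) auto
    show ?thesis unfolding geom_ennreal[OF q0 q1] half e1 e2 e3 ..
  qed
  finally have sumW: "(\<Sum>k. g (W k)) \<le> ennreal (q ^ M * (1 / (1 - q)) + 4 * (1/2) ^ M)" .
  have "hausdorff_pre t n \<Gamma> \<le> (\<Sum>k. ennreal (2 powr (- t * real (length (W k)))))"
    unfolding hausdorff_pre_def
    by (rule INF_lower) (use lenF cover in \<open>auto simp: W_def\<close>)
  also have "\<dots> = (\<Sum>k. g (W k))" by (simp add: g_def)
  finally show ?thesis using sumW unfolding q_def by simp
qed



lemma dir1:
  assumes mc: "measure_condition l"
    and lim: "\<And>X. X \<in> \<Gamma> \<Longrightarrow> ereal (1 - s) \<le> limsup (\<lambda>n. ereal (AVG l (pref X n)))"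
    and st: "s < t" and t0: "0 < t"
  shows "hausdorff_measure t \<Gamma> = 0"
proof -
  define r where "r = (s + t) / 2"
  have rt: "r < t" and sr: "s < r" using st by (auto simp: r_def)
  have freq: "\<exists>N\<ge>M. (1 - r) * real N \<le> real (cnt l (pref X N))" if X: "X \<in> \<Gamma>" for X M
  proof -
    have "ereal (1 - r) < ereal (1 - s)" using sr by simp
    also have "\<dots> \<le> (INF n. SUP m\<in>{n..}. ereal (AVG l (pref X m)))"
      using lim[OF X] by (simp add: limsup_INF_SUP)
    finally have "ereal (1 - r) < (SUP m\<in>{Suc M..}. ereal (AVG l (pref X m)))"
      by (rule less_INF_D) simp
    then obtain m where m: "m \<ge> Suc M" "ereal (1 - r) < ereal (AVG l (pref X m))"
      unfolding less_SUP_iff by auto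
    have m0: "0 < real m" using m by simp
    have "1 - r < real (cnt l (pref X m)) / real m" using m(2) by (simp add: AVG_cnt)
    then have "(1 - r) * real m < real (cnt l (pref X m))" using m0 by (simp add: field_simps)
    then show ?thesis using m(1) by (intro exI[of _ m]) auto
  qed
  define q where "q = 2 powr (r - t)"
  define B where "B M = q ^ M * (1 / (1 - q)) + 4 * (1/2) ^ M" for M :: nat
  have q0: "0 \<le> q" by (simp add: q_def)
  have "2 powr (r - t) < 2 powr 0" using rt by (intro powr_less_mono) auto
  then have q1: "q < 1" by (simp add: q_def)
  have Blim: "B \<longlonglongrightarrow> 0"
  proof -
    have "(\<lambda>M. q ^ M * (1 / (1 - q)) + 4 * (1/2::real) ^ M) \<longlonglongrightarrow> 0 * (1 / (1 - q)) + 4 * 0"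
      using q0 q1 by (intro tendsto_intros) auto
    then show ?thesis unfolding B_def by simp
  qed
  have pre0: "hausdorff_pre t n \<Gamma> = 0" for n
  proof -
    have "hausdorff_pre t n \<Gamma> \<le> 0"
    proof (rule ennreal_le_epsilon)
      fix e :: real assume e: "0 < e"
      have "eventually (\<lambda>M. max n 1 \<le> M \<and> B M < e) sequentially"
        by (intro eventually_conj eventually_ge_at_top order_tendstoD(2)[OF Blim e])
      then obtain M where M: "max n 1 \<le> M" "B M < e"
        unfolding eventually_sequentially by blast
      have "hausdorff_pre t n \<Gamma> \<le> ennreal (B M)"
        unfolding B_def q_def
        by (rule pre_bound[OF mc rt t0]) (use M freq in auto)
      also have "\<dots> \<le> ennreal e" using M by (intro ennreal_leI) simp
      finally show "hausdorff_pre t n \<Gamma> \<le> 0 + ennreal e" by simp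
    qed
    then show ?thesis by simp
  qed
  show ?thesis unfolding hausdorff_measure_def by (simp add: pre0)
qed

lemma MC_False: "measure_condition (\<lambda>_. False)"
  unfolding MC_iff
proof (intro allI)
  fix n i :: nat
  show "2 ^ n * card (VV (\<lambda>_. False) n i) \<le> 2 ^ i"
  proof (cases "n = 0")
    case True
    have "VV (\<lambda>_. False) n i = {v. length v = i}" using True by (simp add: VV_def)
    then show ?thesis using True card_len by simp
  next
    case False
    have "VV (\<lambda>_. False) n i = {}" using False by (simp add: VV_def cnt_def)
    then show ?thesis by simp
  qed
qed

lemma one_in_learnset: "1 \<in> learnset \<Gamma>"
proof -
  have "AVG (\<lambda>_. False) w = 0" for w by (simp add: AVG_def)
  then have "learns (\<lambda>_. False) 1 X" for X
    unfolding learns_def using MC_False by (simp add: Limsup_const)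
  then show ?thesis unfolding learnset_def by auto
qed

lemma learn_to_H:
  assumes "s \<in> learnset \<Gamma>" and "s < t"
  shows "hausdorff_measure t \<Gamma> = 0"
proof -
  from assms(1) obtain l where s0: "0 < s" and l: "\<forall>X\<in>\<Gamma>. learns l s X"
    unfolding learnset_def by auto
  have "\<exists>l. measure_condition l \<and> (\<forall>X\<in>\<Gamma>. ereal (1 - s) \<le> limsup (\<lambda>n. ereal (AVG l (pref X n))))"
  proof (cases "\<Gamma> = {}")
    case True
    then show ?thesis using MC_False by auto
  next
    case False
    then obtain X where "X \<in> \<Gamma>" by auto
    then show ?thesis using l unfolding learns_def by blast
  qed
  then obtain l' where "measure_condition l'" "\<forall>X\<in>\<Gamma>. ereal (1 - s) \<le> limsup (\<lambda>n. ereal (AVG l' (pref X n)))"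
    by blast
  then show ?thesis using dir1[of l' \<Gamma> s t] assms(2) s0 by auto
qed

lemma H_up:
  assumes "hausdorff_measure s \<Gamma> = 0" "0 \<le> s" "s \<le> s'"
  shows "hausdorff_measure s' \<Gamma> = 0"
proof -
  have "hausdorff_pre s' n \<Gamma> \<le> hausdorff_pre s n \<Gamma>" for n
    unfolding hausdorff_pre_def
  proof (rule INF_mono)
    fix W assume W: "W \<in> {W :: nat \<Rightarrow> bool list. (\<forall>k. n \<le> length (W k)) \<and> \<Gamma> \<subseteq> (\<Union>k. cyl (W k))}"
    have "(\<Sum>k. ennreal (2 powr (- s' * real (length (W k))))) \<le> (\<Sum>k. ennreal (2 powr (- s * real (length (W k)))))"
    proof (intro suminf_le ennreal_leI)
      fix k
      have "- s' * real (length (W k)) \<le> - s * real (length (W k))"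
        using assms(3) by (intro mult_right_mono) auto
      then show "2 powr (- s' * real (length (W k))) \<le> 2 powr (- s * real (length (W k)))"
        by (intro powr_mono) auto
    qed (auto intro: summableI)
    then show "\<exists>W'\<in>{W :: nat \<Rightarrow> bool list. (\<forall>k. n \<le> length (W k)) \<and> \<Gamma> \<subseteq> (\<Union>k. cyl (W k))}.
        (\<Sum>k. ennreal (2 powr (- s' * real (length (W' k))))) \<le> (\<Sum>k. ennreal (2 powr (- s * real (length (W k)))))"
      using W by blast
  qed
  then have "hausdorff_measure s' \<Gamma> \<le> hausdorff_measure s \<Gamma>"
    unfolding hausdorff_measure_def by (intro SUP_mono) auto
  then show ?thesis using assms(1) by simp
qed

theorem mainTheorem6:
  fixes \<Gamma> :: "(nat \<Rightarrow> bool) set"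
  shows "dimH \<Gamma> = Inf (learnset \<Gamma>)"
proof -
  define H where "H = {s. 0 \<le> s \<and> hausdorff_measure s \<Gamma> = 0}"
  define L where "L = learnset \<Gamma>"
  have L1: "1 \<in> L" unfolding L_def by (rule one_in_learnset)
  have LH: "t \<in> H" if "s \<in> L" "s < t" for s t
  proof -
    have "0 < s" using that(1) unfolding L_def learnset_def by auto
    then show ?thesis using learn_to_H[of s \<Gamma> t] that unfolding H_def L_def by auto
  qed
  have HL: "t \<in> L" if "s \<in> H" "s < t" for s t
  proof -
    have s: "0 \<le> s" "hausdorff_measure s \<Gamma> = 0" using that(1) unfolding H_def by auto
    then have "hausdorff_measure t \<Gamma> = 0" using H_up[of s \<Gamma> t] that(2) by auto
    then show ?thesis unfolding L_def using dir2[of t \<Gamma>] s that(2) by auto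
  qed
  have H2: "2 \<in> H" using LH[OF L1] by simp
  have bH: "bdd_below H" unfolding H_def by (intro bdd_belowI[of _ 0]) auto
  have bL: "bdd_below L" unfolding L_def learnset_def by (intro bdd_belowI[of _ 0]) auto
  have neH: "H \<noteq> {}" using H2 by auto
  have neL: "L \<noteq> {}" using L1 by auto
  have le1: "Inf H \<le> Inf L"
  proof (rule field_le_epsilon)
    fix e :: real assume e: "0 < e"
    obtain x where x: "x \<in> L" "x < Inf L + e" using cInf_lessD[OF neL, of "Inf L + e"] e by auto
    define y where "y = (x + (Inf L + e)) / 2"
    have "y \<in> H" using LH[OF x(1)] x(2) by (simp add: y_def)
    then have "Inf H \<le> y" by (rule cInf_lower[OF _ bH])
    then show "Inf H \<le> Inf L + e" using x(2) by (simp add: y_def)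
  qed
  have le2: "Inf L \<le> Inf H"
  proof (rule field_le_epsilon)
    fix e :: real assume e: "0 < e"
    obtain x where x: "x \<in> H" "x < Inf H + e" using cInf_lessD[OF neH, of "Inf H + e"] e by auto
    define y where "y = (x + (Inf H + e)) / 2"
    have "y \<in> L" using HL[OF x(1)] x(2) by (simp add: y_def)
    then have "Inf L \<le> y" by (rule cInf_lower[OF _ bL])
    then show "Inf L \<le> Inf H + e" using x(2) by (simp add: y_def)
  qed
  have "dimH \<Gamma> = Inf H" unfolding dimH_def H_def by simp
  then show ?thesis using le1 le2 unfolding L_def by simp
qed

end
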